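(* Let $g:\mathbb Z\to[0,\infty)$ and $\mu\in\mathbb R$, and define $G=\sum_{k\in\mathbb Z}g(k)$ and $J=\sum_{k\in\mathbb Z}(k-\mu)^2g(k)$. If $0<G<\infty$ and $0<J<\infty$, then $$\sup_{k\in\mathbb Z}g(k)\ge\frac{3G^{3/2}}{16\sqrt J+4\sqrt G}.$$ *)

theory Defs
  imports "HOL-Analysis.Analysis"
begin

end

theory Submission
  imports Defs
begin

theorem lemma7:
  fixes g :: "int \<Rightarrow> real" and \<mu> :: real
  assumes nonneg: "\<And>k. g k \<ge> 0"
    and G_fin: "g summable_on UNIV"
    and G_pos: "(\<Sum>\<^sub>\<infinity>k. g k) > 0"
    and J_fin: "(\<lambda>k. (real_of_int k - \<mu>)^2 * g k) summable_on UNIV"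
    and J_pos: "(\<Sum>\<^sub>\<infinity>k. (real_of_int k - \<mu>)^2 * g k) > 0"
  shows "(SUP k. g k) \<ge>
    3 * (\<Sum>\<^sub>\<infinity>k. g k) powr (3/2) /
      (16 * sqrt (\<Sum>\<^sub>\<infinity>k. (real_of_int k - \<mu>)^2 * g k) + 4 * sqrt (\<Sum>\<^sub>\<infinity>k. g k))"
proof -
  define h where "h = (\<lambda>k. (real_of_int k - \<mu>)^2 * g k)"
  define G where "G = (\<Sum>\<^sub>\<infinity>k. g k)"
  define J where "J = (\<Sum>\<^sub>\<infinity>k. h k)"
  define M where "M = (SUP k. g k)"
  define R where "R = 2 * sqrt J / sqrt G"
  have Gp: "G > 0" using G_pos G_def by simp
  have Jp: "J > 0" using J_pos J_def h_def by simp
  have hs: "h summable_on UNIV" using J_fin h_def by simp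
  have Rp: "R > 0" using Gp Jp R_def by simp
  have R2: "R^2 = 4 * J / G" using Gp Jp unfolding R_def
    by (simp add: power_divide power_mult_distrib)
  have gG: "g k \<le> G" for k
  proof -
    have "sum g {k} \<le> infsum g UNIV"
      by (rule finite_sum_le_infsum) (use G_fin nonneg in auto)
    thus ?thesis using G_def by simp
  qed
  have bdd: "bdd_above (range g)" using gG by (meson bdd_aboveI2)
  have gM: "g k \<le> M" for k unfolding M_def using bdd by (simp add: cSUP_upper)
  have M0: "M \<ge> 0" using gM[of 0] nonneg[of 0] by simp
  define S where "S = {ceiling (\<mu> - R)..floor (\<mu> + R)}"
  have finS: "finite S" unfolding S_def by simp
  have gsS: "g summable_on S" by (rule summable_on_subset_banach[OF G_fin]) auto
  have gsC: "g summable_on (-S)" by (rule summable_on_subset_banach[OF G_fin]) auto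
  have hsC: "h summable_on (-S)" by (rule summable_on_subset_banach[OF hs]) auto
  have split: "G = infsum g S + infsum g (-S)"
    using infsum_Un_disjoint[OF gsS gsC] G_def by (simp add: Un_commute)
  have out: "g k \<le> h k / R^2" if "k \<in> -S" for k
  proof -
    have "real_of_int k < \<mu> - R \<or> real_of_int k > \<mu> + R"
      using that unfolding S_def
      by (auto simp: ceiling_le_iff le_floor_iff not_le)
    hence "R \<le> \<bar>real_of_int k - \<mu>\<bar>" by linarith
    hence "R^2 \<le> \<bar>real_of_int k - \<mu>\<bar>^2"
      using Rp by (intro power_mono) auto
    hence "R^2 \<le> (real_of_int k - \<mu>)^2" by simp
    hence "R^2 * g k \<le> (real_of_int k - \<mu>)^2 * g k"
      using nonneg[of k] by (simp add: mult_right_mono)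
    thus ?thesis using Rp unfolding h_def by (simp add: field_simps)
  qed
  have "infsum g (-S) \<le> infsum (\<lambda>k. inverse (R^2) * h k) (-S)"
    by (rule infsum_mono[OF gsC]) (use summable_on_cmult_right[OF hsC, of "inverse (R^2)"] out in \<open>auto simp: divide_inverse mult.commute\<close>)
  also have "\<dots> = infsum h (-S) / R^2"
    using infsum_cmult_right'[of "inverse (R^2)" h "-S"] by (simp add: divide_inverse mult.commute)
  also have "infsum h (-S) \<le> J"
    unfolding J_def by (rule infsum_mono2[OF hsC hs]) (auto simp: h_def nonneg)
  hence "infsum h (-S) / R^2 \<le> J / R^2" using Rp by (simp add: divide_right_mono)
  also have "J / R^2 = G / 4" using R2 Gp Jp by simp
  finally have C1: "infsum g (-S) \<le> G / 4" .
  have "infsum g S = sum g S" using finS by simp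
  also have "\<dots> \<le> sum (\<lambda>_. M) S" by (rule sum_mono) (rule gM)
  also have "\<dots> = real (card S) * M" by simp
  also have "real (card S) \<le> 2 * R + 1"
  proof -
    have "card S = nat (floor (\<mu> + R) - ceiling (\<mu> - R) + 1)" unfolding S_def by simp
    moreover have "real_of_int (floor (\<mu> + R) - ceiling (\<mu> - R) + 1) \<le> 2 * R + 1"
      using of_int_floor_le[of "\<mu>+R"] le_of_int_ceiling[of "\<mu>-R"] by linarith
    ultimately show ?thesis using Rp by linarith
  qed
  hence "real (card S) * M \<le> (2 * R + 1) * M" using M0 by (simp add: mult_right_mono)
  finally have C2: "infsum g S \<le> (2 * R + 1) * M" .
  have key: "3 * G / 4 \<le> (2 * R + 1) * M" using split C1 C2 by linarith
  have sG: "sqrt G > 0" "sqrt J > 0" using Gp Jp by auto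
  have pw: "G powr (3/2) = G * sqrt G"
  proof -
    have "G powr (3/2) = G powr (1 + 1/2)" by simp
    also have "\<dots> = G powr 1 * G powr (1/2)" by (rule powr_add)
    also have "\<dots> = G * sqrt G" using Gp by (simp add: powr_half_sqrt)
    finally show ?thesis .
  qed
  have "2 * R + 1 = (4 * sqrt J + sqrt G) / sqrt G" using sG unfolding R_def by (simp add: field_simps)
  with key have "3 * G / 4 \<le> (4 * sqrt J + sqrt G) / sqrt G * M" by simp
  hence "3 * G * sqrt G \<le> (16 * sqrt J + 4 * sqrt G) * M" using sG by (simp add: field_simps)
  moreover have "16 * sqrt J + 4 * sqrt G > 0" using sG by linarith
  ultimately have "3 * (G * sqrt G) / (16 * sqrt J + 4 * sqrt G) \<le> M"
    by (simp add: divide_le_eq mult.commute mult.left_commute)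
  hence "3 * G powr (3/2) / (16 * sqrt J + 4 * sqrt G) \<le> M" by (subst pw)
  thus ?thesis unfolding G_def J_def M_def h_def .
qed

end
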